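(* Let $m\ge1$, $q=2^m$, let $n$ be even, and let $L(x)=L_k\big(x^{2^k}\big)+L_l\big(x^{2^l}\big)$, where $L_k,L_l$ are $q^2$-linear polynomials over $\mathbb F_{q^n}$ and $k,l$ are integers with $0\le k<l<2m$. Let $e=\gcd(l-k,2m)$, $a=L_k(1)$, $b=L_l(1)$ and $\delta=a^{q^2}b+ab^{q^2}$. Then $\ker(\mathrm{Tr}_2\circ L^\prime)\subseteq\ker\mathrm{Tr}$ if and only if one of the following holds: (1) $l-k=m$, $a\notin\mathbb F_{q^2}$, $\delta\ne0$ and \[\delta^q\big(a^{q^2}+a\big)+\delta\big(b^{q^3}+b^q\big)=\delta^q\big(b^{q^2}+b\big)+\delta\big(a^{q^3}+a^q\big)=0;\] (2) $a,b\in\mathbb F_{q^2}$ and $a^{\frac{q^2-1}{2^e-1}}\ne b^{\frac{q^2-1}{2^e-1}}$; (3) $e$ divides $m$, $a,b\in\mathbb F_{q^2}^*$ and $a^{\frac{2^{l-k}(q-1)}{2^e-1}}=b^{\frac{q-1}{2^e-1}}$.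
   Context: $\mathrm{Tr}$ denotes the trace map of $\mathbb F_{q^n}$ over $\mathbb F_q$ and $\mathrm{Tr}_2$ the trace map of $\mathbb F_{q^n}$ over $\mathbb F_{q^2}$. A $q^2$-linear polynomial over $\mathbb F_{q^n}$ has the form $\sum_{j=0}^{n/2-1}c_jx^{q^{2j}}$ with $c_j\in\mathbb F_{q^n}$. For a $2$-linear polynomial $L(x)=\sum_{j=0}^{mn-1}a_jx^{2^j}$ over $\mathbb F_{q^n}$, its adjoint is $L^\prime(x)=\sum_j(a_jx)^{2^{-j}}$, where $y\mapsto y^{2^{-j}}$ is the inverse of $y\mapsto y^{2^j}$ on $\mathbb F_{q^n}$. Polynomials are regarded as maps on $\mathbb F_{q^n}$; $\ker$ denotes the kernel of an additive map. *)

theory Defs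
  imports Main
begin

definition trace_q :: "nat \<Rightarrow> nat \<Rightarrow> 'a::field \<Rightarrow> 'a" where
  "trace_q q n x = (\<Sum>i<n. x ^ (q ^ i))"

definition trace_q2 :: "nat \<Rightarrow> nat \<Rightarrow> 'a::field \<Rightarrow> 'a" where
  "trace_q2 q n x = (\<Sum>j<n div 2. x ^ (q ^ (2 * j)))"

definition q2_linear :: "nat \<Rightarrow> nat \<Rightarrow> (nat \<Rightarrow> 'a::field) \<Rightarrow> 'a \<Rightarrow> 'a" where
  "q2_linear q n c x = (\<Sum>j<n div 2. c j * x ^ (q ^ (2 * j)))"

definition lin2_poly :: "nat \<Rightarrow> (nat \<Rightarrow> 'a::field) \<Rightarrow> 'a \<Rightarrow> 'a" where
  "lin2_poly N a x = (\<Sum>j<N. a j * x ^ (2 ^ j))"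

text \<open>Adjoint of the 2-linear polynomial sum_{j<N} a_j x^(2^j):
  L'(x) = sum_j (a_j x)^(2^(-j)), where y \<mapsto> y^(2^(-j)) is the inverse of y \<mapsto> y^(2^j).\<close>
definition adjoint2 :: "nat \<Rightarrow> (nat \<Rightarrow> 'a::field) \<Rightarrow> 'a \<Rightarrow> 'a" where
  "adjoint2 N a x = (\<Sum>j<N. inv (\<lambda>y::'a. y ^ (2 ^ j)) (a j * x))"

text \<open>Coefficients (as a 2-linear polynomial of 2-degree < m n) of
  L(x) = L_k(x^(2^k)) + L_l(x^(2^l)) where L_k, L_l are q^2-linear with coefficient
  sequences c, d (q = 2^m): the term c_j x^(q^(2j) 2^k) has index 2 m j + k.\<close>
definition coeffL :: "nat \<Rightarrow> nat \<Rightarrow> nat \<Rightarrow> (nat \<Rightarrow> 'a::field) \<Rightarrow> (nat \<Rightarrow> 'a) \<Rightarrow> nat \<Rightarrow> 'a" where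
  "coeffL m k l c d i =
     (if i mod (2 * m) = k then c (i div (2 * m)) else 0) +
     (if i mod (2 * m) = l then d (i div (2 * m)) else 0)"

end

theory Submission
  imports Defs "HOL-Computational_Algebra.Polynomial"
begin

lemma char2:
  assumes "card (UNIV :: 'a::{field,finite} set) = 2^N" "N \<ge> 1"
  shows "(2::'a) = 0"
proof -
  have "(\<Sum>y\<in>UNIV. y + (1::'a)) = (\<Sum>y\<in>UNIV. y)"
    by (rule sum.reindex_bij_witness[of _ "\<lambda>y. y - 1" "\<lambda>y. y + 1"]) auto
  hence "of_nat (card (UNIV::'a set)) = (0::'a)" by (simp add: sum.distrib)
  hence "(2::'a)^N = 0" using assms(1) by simp
  thus ?thesis by simp
qed

lemma fermat:
  fixes x :: "'a::{field,finite}"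
  shows "x ^ card (UNIV::'a set) = x"
proof (cases "x = 0")
  case True
  have "card (UNIV::'a set) > 0" by (simp add: card_gt_0_iff)
  thus ?thesis using True by simp
next
  case False
  let ?S = "UNIV - {0::'a}"
  have "(\<Prod>y\<in>?S. x * y) = (\<Prod>y\<in>?S. y)"
    by (rule prod.reindex_bij_witness[of _ "\<lambda>y. y / x" "\<lambda>y. x * y"]) (use False in auto)
  hence "x ^ card ?S * (\<Prod>y\<in>?S. y) = (\<Prod>y\<in>?S. y)" by (simp add: prod.distrib)
  moreover have "(\<Prod>y\<in>?S. y) \<noteq> 0" by simp
  ultimately have "x ^ card ?S = 1" by simp
  moreover have "card ?S = card (UNIV::'a set) - 1" by (simp add: card_Diff_singleton)
  moreover have "card (UNIV::'a set) = Suc (card (UNIV::'a set) - 1)"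
    using card_gt_0_iff[of "UNIV::'a set"] by simp
  ultimately show ?thesis by (metis power_Suc mult_1_right)
qed

context
  fixes dummy :: "'a::{field,finite}"
  assumes two: "(2::'a) = 0"
begin

lemma add_self: "(x::'a) + x = 0"
  by (metis mult_2 mult_zero_left two)

lemma minus_eq: "- (x::'a) = x"
  by (metis add_self add.commute add_minus_cancel add_0_right)

lemma diff_eq: "(x::'a) - y = x + y"
  by (metis minus_eq diff_conv_add_uminus)

lemma eq_iff_add0: "((x::'a) = y) = (x + y = 0)"
  by (metis add_self diff_eq eq_iff_diff_eq_0)

lemma add_pow2: "((x::'a) + y) ^ (2^j) = x^(2^j) + y^(2^j)"
proof (induction j arbitrary: x y)
  case 0 
  have "((x::'a) + y)^2 = x^2 + y^2" for x y :: 'a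
    by (simp add: power2_sum two)
  then show ?case by simp
next
  case (Suc j)
  have "((x::'a) + y)^2 = x^2 + y^2" for x y :: 'a
    by (simp add: power2_sum two)
  moreover have e: "z^(2^Suc j) = (z^2)^(2^j)" for z::'a
    by (simp add: power_mult)
  ultimately show ?case using Suc[of "x^2" "y^2"] by (simp only: e)
qed

lemma sum_pow2: "(\<Sum>i\<in>A. (f i::'a)) ^ (2^j) = (\<Sum>i\<in>A. f i ^ (2^j))"
proof (induction A rule: infinite_finite_induct)
  case (insert x F) then show ?case by (simp add: add_pow2)
qed simp_all

lemma pow2_inj: "(x::'a) ^ (2^j) = y ^ (2^j) \<Longrightarrow> x = y"
  by (metis add_pow2 eq_iff_add0 power_eq_0_iff)

end


lemma pow2_add: "(x::'a::monoid_mult)^(2^(i+j)) = (x^(2^i))^(2^j)"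
  by (simp add: power_add power_mult)

lemma fix_iter: "(x::'a::monoid_mult)^(2^g) = x \<Longrightarrow> x^(2^(g*t)) = x"
proof (induction t)
  case 0 then show ?case by simp
next
  case (Suc t)
  have "x^(2^(g*Suc t)) = (x^(2^(g*t)))^(2^g)" by (simp add: pow2_add[symmetric] add.commute)
  then show ?case using Suc by simp
qed

lemma pow2_mod: "(x::'a::monoid_mult)^(2^g) = x \<Longrightarrow> x^(2^i) = x^(2^(i mod g))"
proof -
  assume h: "x^(2^g) = x"
  have "i = g * (i div g) + i mod g" by simp
  hence "x^(2^i) = (x^(2^(g * (i div g))))^(2^(i mod g))" by (metis pow2_add)
  thus ?thesis using fix_iter[OF h] by simp
qed

lemma bz_fix:
  assumes "(x::'a::monoid_mult)^(2^s) = x" "x^(2^g) = x"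
  shows "x^(2^(gcd s g)) = x"
proof (cases "s = 0")
  case True then show ?thesis using assms by simp
next
  case False
  obtain u v where uv: "s * u = g * v + gcd s g" using bezout_nat[OF False] by blast
  have "x = x^(2^(s*u))" using fix_iter[OF assms(1)] by simp
  also have "... = (x^(2^(g*v)))^(2^(gcd s g))" by (simp only: uv pow2_add)
  also have "... = x^(2^(gcd s g))" using fix_iter[OF assms(2)] by simp
  finally show ?thesis by simp
qed

definition ptr :: "nat \<Rightarrow> nat \<Rightarrow> 'a::field \<Rightarrow> 'a" where
  "ptr g r x = (\<Sum>i<r. x^(2^(g*i)))"

lemma roots_bound:
  fixes c :: "nat \<Rightarrow> 'a::field"
  assumes "finite S" "d \<in> S" "\<And>i. i \<in> S \<Longrightarrow> i \<le> d" "c d \<noteq> 0"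
  shows "card {x. (\<Sum>i\<in>S. c i * x^i) = 0} \<le> d"
proof -
  define p where "p = (\<Sum>i\<in>S. monom (c i) i)"
  have ev: "poly p x = (\<Sum>i\<in>S. c i * x^i)" for x by (simp add: p_def poly_sum poly_monom)
  have "coeff p d = (\<Sum>i\<in>S. if i = d then c i else 0)"
    by (simp add: p_def coeff_sum coeff_monom eq_commute)
  also have "... = c d" using assms(1,2) by (simp add: sum.delta)
  finally have "p \<noteq> 0" using assms(4) by auto
  have "degree p \<le> d" unfolding p_def
    by (rule degree_sum_le[OF assms(1)]) (meson assms(3) degree_monom_le order_trans)
  have "card {x. poly p x = 0} \<le> degree p" by (rule card_poly_roots_bound[OF \<open>p \<noteq> 0\<close>])
  thus ?thesis using \<open>degree p \<le> d\<close> ev by simp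
qed

locale gf =
  fixes N :: nat and dummy :: "'a::{field,finite}"
  assumes cardN: "card (UNIV::'a set) = 2^N" and N1: "N \<ge> 1"
begin

lemma two: "(2::'a) = 0" using char2[OF cardN N1] .

lemma frobN: "(x::'a)^(2^N) = x" using fermat[of x] cardN by simp

lemma fixK_card:
  assumes "h \<ge> 1"
  shows "card {x::'a. x^(2^h) = x} \<le> 2^h"
proof -
  have "(1::nat) < 2^h" using assms by (intro one_less_power) auto
  hence ne: "(1::nat) \<noteq> 2^h" by simp
  have "{x::'a. x^(2^h) = x} = {x. (\<Sum>i\<in>{1,2^h}. 1 * x^i) = 0}"
    using ne eq_iff_add0[OF two] by (auto simp: add.commute)
  also have "card ... \<le> 2^h"
    by (rule roots_bound) (use ne in auto)
  finally show ?thesis .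
qed

lemma root1_card:
  assumes "E \<ge> 1"
  shows "card {x::'a. x^E = 1} \<le> E"
proof -
  have ne: "(0::nat) \<noteq> E" using assms by simp
  have "{x::'a. x^E = 1} = {x. (\<Sum>i\<in>{0,E}. 1 * x^i) = 0}"
    using ne eq_iff_add0[OF two] by (auto simp: add.commute)
  also have "card ... \<le> E"
    by (rule roots_bound) (use ne in auto)
  finally show ?thesis .
qed

lemma ptr_ker_card:
  assumes "g \<ge> 1" "r \<ge> 1"
  shows "card {x::'a. ptr g r x = 0} \<le> 2^(g*(r-1))"
proof -
  let ?S = "(\<lambda>j. 2^(g*j)::nat) ` {..<r}"
  have inj: "inj_on (\<lambda>j. 2^(g*j)::nat) {..<r}"
    using assms(1) by (intro inj_onI) simp
  have "ptr g r x = (\<Sum>i\<in>?S. 1 * x^i)" for x::'a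
    by (simp add: ptr_def sum.reindex[OF inj])
  hence "{x::'a. ptr g r x = 0} = {x. (\<Sum>i\<in>?S. 1 * x^i) = 0}" by simp
  also have "card ... \<le> 2^(g*(r-1))"
  proof (rule roots_bound)
    show "2^(g*(r-1)) \<in> ?S" using assms by auto
    show "\<And>i. i \<in> ?S \<Longrightarrow> i \<le> 2^(g*(r-1))" using assms by auto
  qed auto
  finally show ?thesis .
qed

end


lemma fiber_card:
  assumes "finite A" "\<And>x. x \<in> A \<Longrightarrow> card {y\<in>A. f y = f x} = k"
  shows "card A = k * card (f ` A)"
proof -
  have "A = (\<Union>v\<in>f`A. {y\<in>A. f y = v})" by auto
  moreover have "card (\<Union>v\<in>f`A. {y\<in>A. f y = v}) = (\<Sum>v\<in>f`A. card {y\<in>A. f y = v})"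
    by (rule card_UN_disjoint) (use assms(1) in auto)
  ultimately have "card A = (\<Sum>v\<in>f`A. card {y\<in>A. f y = v})" by simp
  also have "... = (\<Sum>v\<in>f`A. k)" by (rule sum.cong) (auto simp: assms(2))
  finally show ?thesis by simp
qed

lemma add_kernel_card:
  fixes f :: "'a::{ab_group_add,finite} \<Rightarrow> 'b::ab_group_add"
  assumes add: "\<And>x y. f (x + y) = f x + f y"
  shows "card (UNIV::'a set) = card {x. f x = 0} * card (range f)"
proof (rule fiber_card)
  fix x :: 'a
  have f0: "f 0 = 0" using add[of 0 0] by simp
  have fm: "f (y - x) = f y - f x" for y using add[of "y - x" x] by (simp add: algebra_simps)
  show "card {y\<in>UNIV. f y = f x} = card {x. f x = 0}"
    by (rule bij_betw_same_card[of "\<lambda>y. y - x"], rule bij_betw_byWitness[of _ "\<lambda>y. y + x"])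
       (auto simp: fm add)
qed simp

context gf
begin

lemma ptr_add: "ptr g r ((x::'a) + y) = ptr g r x + ptr g r y"
  by (simp add: ptr_def add_pow2[OF two] sum.distrib)

lemma ptr_zero: "ptr g r (0::'a) = 0"
  by (simp add: ptr_def power_0_left)

lemma ptr_sum: "ptr g r (\<Sum>i\<in>A. (f i::'a)) = (\<Sum>i\<in>A. ptr g r (f i))"
  by (simp add: ptr_def sum_pow2[OF two] sum.swap[of _ A])

lemma ptr_pow: "ptr g r ((x::'a)^(2^j)) = (ptr g r x)^(2^j)"
  unfolding ptr_def sum_pow2[OF two]
  by (rule sum.cong) (simp_all, metis power_mult mult.commute)

lemma ptr_scal: "(a::'a)^(2^g) = a \<Longrightarrow> ptr g r (a * x) = a * ptr g r x"
  unfolding ptr_def by (simp add: power_mult_distrib fix_iter sum_distrib_left)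

lemma ptr_shift:
  assumes "g * r = N"
  shows "ptr g r ((x::'a)^(2^g)) = ptr g r x"
proof -
  define f where "f i = x^(2^(g*i))" for i
  have e: "(x^(2^g))^(2^(g*i)) = f (Suc i)" for i
    by (simp add: f_def pow2_add[symmetric] add.commute)
  have "f r = f 0" using frobN assms by (simp add: f_def)
  have "(\<Sum>i<Suc r. f i) = f 0 + (\<Sum>i<r. f (Suc i))" by (rule sum.lessThan_Suc_shift)
  moreover have "(\<Sum>i<Suc r. f i) = (\<Sum>i<r. f i) + f r" by simp
  ultimately have "(\<Sum>i<r. f (Suc i)) = (\<Sum>i<r. f i)" using \<open>f r = f 0\<close> by (simp add: add.commute)
  thus ?thesis by (simp add: ptr_def e f_def)
qed

lemma ptr_fix: "g * r = N \<Longrightarrow> (ptr g r (x::'a))^(2^g) = ptr g r x"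
  using ptr_shift ptr_pow by metis

definition tr :: "'a \<Rightarrow> 'a" where "tr x = ptr 1 N x"

lemma tr_add: "tr ((x::'a) + y) = tr x + tr y" by (simp add: tr_def ptr_add)

lemma tr_zero: "tr (0::'a) = 0" by (simp add: tr_def ptr_zero)

lemma tr_sum: "tr (\<Sum>i\<in>A. (f i::'a)) = (\<Sum>i\<in>A. tr (f i))" by (simp add: tr_def ptr_sum)

lemma tr_pow: "tr ((x::'a)^(2^j)) = tr x"
proof (induction j)
  case (Suc j)
  have "tr (x^(2^Suc j)) = tr ((x^(2^j))^(2^1))" by (simp only: power_Suc2 power_mult power_one_right)
  also have "... = tr (x^(2^j))" unfolding tr_def by (rule ptr_shift) simp
  finally show ?case using Suc by simp
qed simp

lemma tr01: "tr (x::'a) = 0 \<or> tr x = 1"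
proof -
  have "(tr x)^2 = tr x" using ptr_fix[of 1 N x] by (simp add: tr_def)
  hence "tr x * (tr x - 1) = 0" by (simp add: algebra_simps power2_eq_square)
  thus ?thesis by simp
qed

lemma ptr_image:
  assumes "g \<ge> 1" "r \<ge> 1" "g * r = N"
  shows "range (ptr g r :: 'a \<Rightarrow> 'a) = {x. x^(2^g) = x}"
    and "card {x::'a. x^(2^g) = x} = 2^g"
proof -
  let ?K = "{x::'a. x^(2^g) = x}"
  have sub: "range (ptr g r :: 'a \<Rightarrow> 'a) \<subseteq> ?K" using ptr_fix[OF assms(3)] by auto
  have c1: "card (UNIV::'a set) = card {x::'a. ptr g r x = 0} * card (range (ptr g r :: 'a \<Rightarrow> 'a))"
    by (rule add_kernel_card) (rule ptr_add)
  have c2: "card {x::'a. ptr g r x = 0} \<le> 2^(g*(r-1))" by (rule ptr_ker_card[OF assms(1,2)])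
  have c3: "card ?K \<le> 2^g" by (rule fixK_card[OF assms(1)])
  have c4: "card (range (ptr g r :: 'a \<Rightarrow> 'a)) \<le> card ?K" by (rule card_mono[OF _ sub]) simp
  have "N = g*(r-1) + g" using assms by (cases r) auto
  hence "(2::nat)^N = 2^(g*(r-1)) * 2^g" by (simp add: power_add)
  hence "2^(g*(r-1)) * 2^g \<le> 2^(g*(r-1)) * card (range (ptr g r :: 'a \<Rightarrow> 'a))"
    using c1 c2 cardN by (metis mult_le_mono1)
  hence c5: "2^g \<le> card (range (ptr g r :: 'a \<Rightarrow> 'a))" by simp
  show "card ?K = 2^g" using c3 c4 c5 by linarith
  show "range (ptr g r :: 'a \<Rightarrow> 'a) = ?K"
    by (rule card_subset_eq) (use sub c3 c4 c5 in auto)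
qed

end


context gf
begin


lemma tr_nonzero: "\<exists>z::'a. tr z \<noteq> 0"
proof (rule ccontr)
  assume "\<not> (\<exists>z::'a. tr z \<noteq> 0)"
  hence "{x::'a. tr x = 0} = UNIV" by auto
  moreover have "card {x::'a. tr x = 0} \<le> 2^(1*(N-1))" unfolding tr_def by (rule ptr_ker_card) (use N1 in auto)
  moreover have "(2::nat)^(N-1) < 2^N" using N1 by simp
  ultimately show False using cardN N1 by simp
qed

lemma nondeg: "(\<And>z. tr ((w::'a) * z) = 0) \<Longrightarrow> w = 0"
proof (rule ccontr)
  assume h: "\<And>z. tr (w * z) = 0" "w \<noteq> 0"
  obtain z0 :: 'a where "tr z0 \<noteq> 0" using tr_nonzero by blast
  moreover have "tr (w * (z0 / w)) = 0" by (rule h(1))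
  ultimately show False using h(2) by simp
qed

definition chi :: "'a \<Rightarrow> int" where "chi x = (if tr x = 0 then 1 else -1)"

lemma chi_add: "chi ((x::'a) + y) = chi x * chi y"
proof -
  have o: "(1::'a) + 1 = 0" using two by simp
  show ?thesis using tr01[of x] tr01[of y] tr_add[of x y] o by (auto simp: chi_def)
qed

definition perp :: "'a set \<Rightarrow> 'a set" where "perp U = {y. \<forall>u\<in>U. tr (u * y) = 0}"

lemma char_sum:
  assumes cl: "\<And>u v. u \<in> U \<Longrightarrow> v \<in> U \<Longrightarrow> u + v \<in> U"
  shows "(\<Sum>u\<in>U. chi (u * y)) = (if y \<in> perp U then int (card U) else 0)"
proof (cases "y \<in> perp U")
  case True
  hence "(\<Sum>u\<in>U. chi (u * y)) = (\<Sum>u\<in>U. 1)" by (intro sum.cong) (auto simp: perp_def chi_def)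
  then show ?thesis using True by simp
next
  case False
  then obtain u0 where u0: "u0 \<in> U" "tr (u0 * y) \<noteq> 0" by (auto simp: perp_def)
  hence c0: "chi (u0 * y) = -1" by (simp add: chi_def)
  have "(\<Sum>u\<in>U. chi (u * y)) = (\<Sum>u\<in>U. chi ((u + u0) * y))"
    by (rule sum.reindex_bij_witness[of _ "\<lambda>u. u + u0" "\<lambda>u. u + u0"])
       (auto simp: cl u0 add.assoc add_self[OF two])
  also have "... = (\<Sum>u\<in>U. chi (u * y) * chi (u0 * y))"
    by (simp add: distrib_right chi_add)
  also have "... = - (\<Sum>u\<in>U. chi (u * y))" by (simp add: c0 sum_negf)
  finally have "(\<Sum>u\<in>U. chi (u * y)) = 0" by simp
  then show ?thesis using False by simp
qed

lemma perp_card: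
  assumes cl: "\<And>u v. u \<in> U \<Longrightarrow> v \<in> U \<Longrightarrow> u + v \<in> U" and z: "0 \<in> U"
  shows "card U * card (perp U) = card (UNIV::'a set)"
proof -
  have "(\<Sum>y\<in>UNIV. \<Sum>u\<in>U. chi (u * y)) = (\<Sum>y\<in>UNIV. if y \<in> perp U then int (card U) else 0)"
    by (rule sum.cong) (auto simp: char_sum[OF cl])
  also have "... = (\<Sum>y\<in>perp U. int (card U))"
    by (simp add: sum.inter_restrict[symmetric])
  also have "... = int (card U) * int (card (perp U))" by simp
  finally have A: "(\<Sum>y\<in>UNIV. \<Sum>u\<in>U. chi (u * y)) = int (card U) * int (card (perp U))" .
  have pU: "perp (UNIV::'a set) = {0}"
    using nondeg by (auto simp: perp_def mult.commute tr_zero)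
  have "(\<Sum>y\<in>UNIV. \<Sum>u\<in>U. chi (u * y)) = (\<Sum>u\<in>U. \<Sum>y\<in>UNIV. chi (y * u))"
    by (subst sum.swap) (simp add: mult.commute)
  also have "... = (\<Sum>u\<in>U. if u = 0 then int (card (UNIV::'a set)) else 0)"
    by (rule sum.cong) (auto simp: char_sum[of UNIV] pU)
  also have "... = int (card (UNIV::'a set))" using z by (simp add: sum.delta)
  finally have "int (card U) * int (card (perp U)) = int (card (UNIV::'a set))" using A by simp
  thus ?thesis by (metis of_nat_eq_iff of_nat_mult)
qed

lemma perp_closed: "u \<in> perp U \<Longrightarrow> v \<in> perp U \<Longrightarrow> u + v \<in> perp U"
  by (auto simp: perp_def distrib_left tr_add)

lemma perp_zero: "0 \<in> perp U"
  by (simp add: perp_def tr_zero)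

lemma perp_perp:
  assumes cl: "\<And>u v. u \<in> U \<Longrightarrow> v \<in> U \<Longrightarrow> u + v \<in> U" and z: "0 \<in> U"
  shows "perp (perp U) = U"
proof -
  have c1: "card U * card (perp U) = card (UNIV::'a set)" by (rule perp_card[OF cl z])
  have c2: "card (perp U) * card (perp (perp U)) = card (UNIV::'a set)"
    by (rule perp_card) (auto intro: perp_closed perp_zero)
  have "card (perp U) > 0" using perp_zero[of U] by (auto simp: card_gt_0_iff)
  hence "card U = card (perp (perp U))" using c1 c2 by (metis mult.commute mult_left_cancel neq0_conv)
  moreover have "U \<subseteq> perp (perp U)" by (auto simp: perp_def mult.commute)
  ultimately show ?thesis by (metis card_subset_eq finite)
qed

lemma perp_anti: "U \<subseteq> V \<Longrightarrow> perp V \<subseteq> perp U"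
  by (auto simp: perp_def)

end


context gf
begin


lemma fix_closed_add: "(x::'a)^(2^g) = x \<Longrightarrow> y^(2^g) = y \<Longrightarrow> (x+y)^(2^g) = x + y"
  by (simp add: add_pow2[OF two])

lemma ptr_selfadj:
  assumes "g * r = N"
  shows "tr (ptr g r (w::'a) * z) = tr (w * ptr g r z)"
proof -
  define h where "h i = z^(2^(g * Suc i))" for i
  have "ptr g r z = (ptr g r z)^(2^g)" using ptr_fix[OF assms] by simp
  also have "... = (\<Sum>i<r. h i)" unfolding ptr_def sum_pow2[OF two] h_def
    by (rule sum.cong) (simp_all add: pow2_add[symmetric] add.commute)
  also have "... = (\<Sum>i<r. h (r - Suc i))" by (rule sum.nat_diff_reindex[symmetric])
  finally have pz: "ptr g r z = (\<Sum>i<r. z^(2^(g*(r-i))))"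
    by (simp add: h_def Suc_diff_Suc)
  have t: "tr (w^(2^(g*i)) * z) = tr (w * z^(2^(g*(r-i))))" if "i < r" for i
  proof -
    have "g*i + g*(r-i) = N" using that assms by (simp add: add_mult_distrib2[symmetric])
    have "tr (w * z^(2^(g*(r-i)))) = tr ((w * z^(2^(g*(r-i))))^(2^(g*i)))" by (rule tr_pow[symmetric])
    also have "... = tr (w^(2^(g*i)) * z^(2^(g*(r-i) + g*i)))"
      by (simp add: power_mult_distrib pow2_add)
    also have "... = tr (w^(2^(g*i)) * z)" using \<open>g*i + g*(r-i) = N\<close> frobN by (simp add: add.commute)
    finally show ?thesis by simp
  qed
  have "tr (ptr g r w * z) = (\<Sum>i<r. tr (w^(2^(g*i)) * z))"
    by (simp add: ptr_def sum_distrib_right tr_sum)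
  also have "... = (\<Sum>i<r. tr (w * z^(2^(g*(r-i)))))" by (rule sum.cong) (simp_all add: t)
  also have "... = tr (w * ptr g r z)" by (simp add: pz sum_distrib_left tr_sum)
  finally show ?thesis .
qed

lemma inv_pow2: "(inv (\<lambda>y::'a. y^(2^j)) z)^(2^j) = z"
proof -
  have "inj (\<lambda>y::'a. y^(2^j))" by (intro injI) (rule pow2_inj[OF two])
  hence "surj (\<lambda>y::'a. y^(2^j))" by (rule finite_UNIV_inj_surj[OF finite_UNIV])
  thus ?thesis by (rule surj_f_inv_f)
qed

lemma lin2_adj: "tr (lin2_poly M a (x::'a) * y) = tr (x * adjoint2 M a y)"
proof -
  have "tr (x * inv (\<lambda>y::'a. y^(2^j)) (a j * y)) = tr (a j * x^(2^j) * y)" for j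
  proof -
    have "tr (x * inv (\<lambda>y::'a. y^(2^j)) (a j * y)) = tr ((x * inv (\<lambda>y::'a. y^(2^j)) (a j * y))^(2^j))"
      by (rule tr_pow[symmetric])
    also have "... = tr (a j * x^(2^j) * y)" by (simp add: power_mult_distrib inv_pow2 algebra_simps)
    finally show ?thesis .
  qed
  thus ?thesis by (simp add: lin2_poly_def adjoint2_def sum_distrib_right sum_distrib_left tr_sum)
qed

lemma ptr_zero_iff:
  assumes "g \<ge> 1" "r \<ge> 1" "g * r = N"
  shows "ptr g r (w::'a) = 0 \<longleftrightarrow> w \<in> perp {x. x^(2^g) = x}"
proof
  assume h: "ptr g r w = 0"
  show "w \<in> perp {x. x^(2^g) = x}"
  proof (unfold perp_def, safe)
    fix v :: 'a assume "v^(2^g) = v"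
    then obtain z where "v = ptr g r z" using ptr_image(1)[OF assms] by blast
    hence "tr (v * w) = tr (w * ptr g r z)" by (simp add: mult.commute)
    also have "... = tr (ptr g r w * z)" by (rule ptr_selfadj[OF assms(3), symmetric])
    finally show "tr (v * w) = 0" using h by (simp add: tr_zero)
  qed
next
  assume h: "w \<in> perp {x. x^(2^g) = x}"
  show "ptr g r w = 0"
  proof (rule nondeg)
    fix z :: 'a
    have "(ptr g r z)^(2^g) = ptr g r z" by (rule ptr_fix[OF assms(3)])
    hence "ptr g r z \<in> {x. x^(2^g) = x}" by simp
    hence "tr (ptr g r z * w) = 0" using h by (auto simp: perp_def)
    thus "tr (ptr g r w * z) = 0" using ptr_selfadj[OF assms(3), of z w] by (simp add: mult.commute)
  qed
qed

lemma main_reduction: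
  fixes G G' :: "'a \<Rightarrow> 'a"
  assumes add: "\<And>x y. G (x + y) = G x + G y"
    and adj: "\<And>x y. tr (G x * y) = tr (x * G' y)"
    and a1: "g1 \<ge> 1" "r1 \<ge> 1" "g1 * r1 = N"
    and a2: "g2 \<ge> 1" "r2 \<ge> 1" "g2 * r2 = N"
  shows "(\<forall>y. ptr g2 r2 (G' y) = 0 \<longrightarrow> ptr g1 r1 y = 0)
     \<longleftrightarrow> {x. x^(2^g1) = x} \<subseteq> G ` {x. x^(2^g2) = x}"
proof -
  let ?A = "{x::'a. x^(2^g1) = x}" and ?B = "{x::'a. x^(2^g2) = x}"
  have G0: "G 0 = 0"
  proof -
    have "G (0+0) = G 0 + G 0" by (rule add)
    thus ?thesis by (metis add_0 add_cancel_right_right)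
  qed
  have e1: "ptr g2 r2 (G' y) = 0 \<longleftrightarrow> y \<in> perp (G ` ?B)" for y
    using ptr_zero_iff[OF a2, of "G' y"] by (auto simp: perp_def adj)
  have e2: "ptr g1 r1 y = 0 \<longleftrightarrow> y \<in> perp ?A" for y
    using ptr_zero_iff[OF a1] .
  have clA: "u \<in> ?A \<Longrightarrow> v \<in> ?A \<Longrightarrow> u + v \<in> ?A" for u v by (simp add: fix_closed_add)
  have zA: "0 \<in> ?A" by simp
  have clB: "u \<in> G ` ?B \<Longrightarrow> v \<in> G ` ?B \<Longrightarrow> u + v \<in> G ` ?B" for u v
  proof -
    assume "u \<in> G ` ?B" "v \<in> G ` ?B"
    then obtain u' v' where "u' \<in> ?B" "v' \<in> ?B" "u = G u'" "v = G v'" by blast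
    thus "u + v \<in> G ` ?B" using fix_closed_add[of u' g2 v'] by (auto simp: add[symmetric])
  qed
  have "(0::'a) \<in> ?B" by simp
  hence zB: "0 \<in> G ` ?B" using G0 by (metis imageI)
  have "(\<forall>y. ptr g2 r2 (G' y) = 0 \<longrightarrow> ptr g1 r1 y = 0) \<longleftrightarrow> perp (G ` ?B) \<subseteq> perp ?A"
    using e1 e2 by auto
  also have "... \<longleftrightarrow> ?A \<subseteq> G ` ?B"
  proof
    assume "perp (G ` ?B) \<subseteq> perp ?A"
    hence "perp (perp ?A) \<subseteq> perp (perp (G ` ?B))" by (rule perp_anti)
    thus "?A \<subseteq> G ` ?B" using perp_perp[of ?A] perp_perp[of "G ` ?B"] clA zA clB zB by simp
  qed (rule perp_anti)
  finally show ?thesis .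
qed

end


lemma mersenne_dvd:
  assumes "h dvd (s::nat)"
  shows "(2^h - 1) dvd (2^s - (1::nat))"
proof -
  obtain t where s: "s = h * t" using assms by blast
  have "((2::int)^h - 1) dvd ((2^h)^t - 1)"
    by (simp add: power_diff_1_eq)
  hence "((2::int)^h - 1) dvd (2^s - 1)" by (simp add: s power_mult)
  moreover have "int (2^h - 1) = 2^h - 1" by (simp add: of_nat_diff)
  moreover have "int (2^s - 1) = 2^s - 1" by (simp add: of_nat_diff)
  ultimately show ?thesis by (metis of_nat_dvd_iff)
qed

lemma nat_prod_eq:
  fixes k c H E :: nat
  assumes "k \<le> H" "c \<le> E" "k * c = H * E" "0 < H" "0 < E"
  shows "k = H \<and> c = E"
proof -
  have "k * c \<le> k * E" using assms(2) by simp
  moreover have "k * E \<le> H * E" using assms(1) by simp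
  ultimately have "k * E = H * E" using assms(3) by linarith
  hence kH: "k = H" using assms(5) by simp
  hence "H * c = H * E" using assms(3) by simp
  thus ?thesis using kH assms(4) by simp
qed

context gf
begin

lemma fix_mult: "(x::'a)^(2^g) = x \<Longrightarrow> y^(2^g) = y \<Longrightarrow> (x*y)^(2^g) = x*y"
  by (simp add: power_mult_distrib)

lemma fix_div: "(x::'a)^(2^g) = x \<Longrightarrow> y^(2^g) = y \<Longrightarrow> (x/y)^(2^g) = x/y"
  by (simp add: power_divide)

lemma fix_pow: "(x::'a)^(2^g) = x \<Longrightarrow> (x^j)^(2^g) = x^j"
  by (metis power_mult mult.commute)

lemma unit_pow: "(x::'a) \<noteq> 0 \<Longrightarrow> x^(2^g) = x \<Longrightarrow> x^(2^g - 1) = 1"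
proof -
  assume "x \<noteq> 0" "x^(2^g) = x"
  moreover have "x^(2^g) = x^(2^g - 1) * x" by (metis power_minus_mult zero_less_power pos2)
  ultimately show ?thesis by simp
qed

context
  fixes g r s :: nat
  assumes g1: "g \<ge> 1" and r1: "r \<ge> 1" and gr: "g * r = N" and s0: "s > 0"
begin

lemma GLb:
  assumes "(\<mu>::'a) \<noteq> 0"
  shows "(\<mu>^(2^s - 1) = 1 \<and> \<mu>^(2^g) = \<mu>) \<longleftrightarrow> \<mu>^(2^(gcd s g)) = \<mu>"
proof -
  have e: "\<mu>^(2^s) = \<mu>^(2^s - 1) * \<mu>" by (metis power_minus_mult zero_less_power pos2)
  have "\<mu>^(2^s - 1) = 1 \<longleftrightarrow> \<mu>^(2^s) = \<mu>" using e assms by auto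
  moreover have "\<mu>^(2^s) = \<mu> \<and> \<mu>^(2^g) = \<mu> \<longleftrightarrow> \<mu>^(2^(gcd s g)) = \<mu>"
  proof
    assume "\<mu>^(2^s) = \<mu> \<and> \<mu>^(2^g) = \<mu>"
    thus "\<mu>^(2^(gcd s g)) = \<mu>" using bz_fix by blast
  next
    assume h: "\<mu>^(2^(gcd s g)) = \<mu>"
    obtain a b where "s = gcd s g * a" "g = gcd s g * b" by (metis dvd_def gcd_dvd1 gcd_dvd2)
    thus "\<mu>^(2^s) = \<mu> \<and> \<mu>^(2^g) = \<mu>" using fix_iter[OF h] by metis
  qed
  ultimately show ?thesis by blast
qed

lemma GL:
  shows "card {\<mu>::'a. \<mu> \<noteq> 0 \<and> \<mu>^(2^(gcd s g)) = \<mu>} = 2^(gcd s g) - 1"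
    and "\<And>c::'a. c^(2^g) = c \<Longrightarrow> c \<noteq> 0 \<Longrightarrow>
           (\<exists>w. w^(2^g) = w \<and> w \<noteq> 0 \<and> w^(2^s - 1) = c) \<longleftrightarrow> c^((2^g - 1) div (2^(gcd s g) - 1)) = 1"
proof -
  define h where "h = gcd s g"
  define D where "D = 2^s - (1::nat)"
  define E where "E = (2^g - 1) div (2^h - (1::nat))"
  define A where "A = {w::'a. w^(2^g) = w \<and> w \<noteq> 0}"
  define Ker where "Ker = {\<mu>::'a. \<mu> \<noteq> 0 \<and> \<mu>^(2^h) = \<mu>}"
  define R where "R = {c::'a. c \<in> A \<and> c^E = 1}"
  have h1: "h \<ge> 1" using g1 by (simp add: h_def Suc_le_eq)
  have hg: "h \<le> g" using g1 by (simp add: h_def gcd_le2_nat)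
  have dvdD: "(2^h - 1) dvd D" unfolding D_def h_def by (rule mersenne_dvd) simp
  have dvdG: "(2^h - 1) dvd (2^g - (1::nat))" unfolding h_def by (rule mersenne_dvd) simp
  have "(1::nat) < 2^h" using h1 by (intro one_less_power) auto
  hence Hpos: "(2::nat)^h - 1 > 0" by simp
  have GE: "2^g - 1 = (2^h - 1) * E" using dvdG by (simp add: E_def)
  have "(1::nat) < 2^g" using g1 by (intro one_less_power) auto
  hence Epos: "E > 0" using GE by (cases "E = 0") auto
  obtain D1 where D1: "D = (2^h - 1) * D1" using dvdD by blast
  have DE: "D * E = (2^g - 1) * D1" using D1 GE by (simp add: algebra_simps)
  have cardK: "card {x::'a. x^(2^g) = x} = 2^g" by (rule ptr_image(2)[OF g1 r1 gr])
  have cardA: "card A = 2^g - 1"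
  proof -
    have "A = {x::'a. x^(2^g) = x} - {0}" by (auto simp: A_def)
    thus ?thesis using cardK by (simp add: card_Diff_singleton)
  qed
  have KerA: "\<mu> \<in> Ker \<longleftrightarrow> \<mu> \<in> A \<and> \<mu>^D = 1" for \<mu>
    using GLb[of \<mu>] by (auto simp: Ker_def A_def D_def h_def)
  have fib: "card {y\<in>A. y^D = x^D} = card Ker" if "x \<in> A" for x
  proof -
    have x0: "x \<noteq> 0" and xK: "x^(2^g) = x" using that by (auto simp: A_def)
    have "{y\<in>A. y^D = x^D} = (\<lambda>\<mu>. x * \<mu>) ` Ker"
    proof safe
      fix y assume y: "y \<in> A" "y^D = x^D"
      have "y / x \<in> Ker" unfolding KerA using y x0 xK
        by (auto simp: A_def power_divide fix_div)
      moreover have "y = x * (y / x)" using x0 by simp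
      ultimately show "y \<in> (\<lambda>\<mu>. x * \<mu>) ` Ker" by blast
    next
      fix \<mu> assume "\<mu> \<in> Ker"
      hence "\<mu> \<in> A" "\<mu>^D = 1" using KerA by auto
      thus "x * \<mu> \<in> A" "(x * \<mu>)^D = x^D" using that x0 xK
        by (auto simp: A_def fix_mult power_mult_distrib)
    qed
    moreover have "inj_on (\<lambda>\<mu>. x * \<mu>) Ker" using x0 by (intro inj_onI) simp
    ultimately show ?thesis by (simp add: card_image)
  qed
  have c1: "card A = card Ker * card ((\<lambda>w. w^D) ` A)"
    by (rule fiber_card) (use fib in auto)
  have c2: "card Ker \<le> 2^h - 1"
  proof -
    have "Ker = {x::'a. x^(2^h) = x} - {0}" by (auto simp: Ker_def)
    moreover have "card {x::'a. x^(2^h) = x} \<le> 2^h" by (rule fixK_card[OF h1])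
    moreover have "0 \<in> {x::'a. x^(2^h) = x}" using h1 by simp
    ultimately show ?thesis by (simp add: card_Diff_singleton)
  qed
  have sub: "(\<lambda>w. w^D) ` A \<subseteq> R"
  proof safe
    fix w assume w: "w \<in> A"
    hence w0: "w \<noteq> 0" and wK: "w^(2^g) = w" by (auto simp: A_def)
    have "(w^D)^E = (w^(2^g - 1))^D1" by (simp only: power_mult[symmetric] DE)
    also have "... = 1" using unit_pow[OF w0 wK] by simp
    finally show "w^D \<in> R" using w0 wK by (simp add: R_def A_def fix_pow)
  qed
  have c3: "card R \<le> E"
  proof -
    have "R \<subseteq> {c::'a. c^E = 1}" by (auto simp: R_def)
    hence "card R \<le> card {c::'a. c^E = 1}" by (intro card_mono) auto
    also have "... \<le> E" by (rule root1_card) (use Epos in simp)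
    finally show ?thesis .
  qed
  have c4: "card ((\<lambda>w. w^D) ` A) \<le> card R" by (intro card_mono sub) auto
  have eqs: "card Ker = 2^h - 1 \<and> card ((\<lambda>w. w^D) ` A) = E"
    by (rule nat_prod_eq[OF c2 _ _ Hpos Epos]) (use c1 c3 c4 cardA GE in auto)
  show "card {\<mu>::'a. \<mu> \<noteq> 0 \<and> \<mu>^(2^(gcd s g)) = \<mu>} = 2^(gcd s g) - 1"
    using eqs by (simp add: Ker_def h_def)
  have imR: "(\<lambda>w. w^D) ` A = R"
    by (rule card_subset_eq) (use sub eqs c3 c4 in auto)
  fix c :: 'a assume cK: "c^(2^g) = c" and c0: "c \<noteq> 0"
  have "(\<exists>w. w^(2^g) = w \<and> w \<noteq> 0 \<and> w^(2^s - 1) = c) \<longleftrightarrow> c \<in> (\<lambda>w. w^D) ` A"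
    by (auto simp: A_def D_def)
  also have "... \<longleftrightarrow> c^E = 1" using imR cK c0 by (auto simp: R_def A_def)
  finally show "(\<exists>w. w^(2^g) = w \<and> w \<noteq> 0 \<and> w^(2^s - 1) = c) \<longleftrightarrow> c^((2^g - 1) div (2^(gcd s g) - 1)) = 1"
    by (simp add: E_def h_def)
qed

end
end


context gf
begin

lemma add_selfA[simp]: "(x::'a) + x = 0" by (rule add_self[OF two])

lemma add_selfB[simp]: "(y::'a) + (x + x) = y" by simp

lemma caseB:
  fixes a b :: 'a
  assumes m1: "m \<ge> 1" and hq: "q = 2^m" and n1: "n \<ge> 1" and mn: "m*n = N"
    and s0: "0 < s" and s2: "s < 2*m"
    and notA: "\<not> (a^(q^2) = a \<and> b^(q^2) = b)"
  defines "\<delta> \<equiv> a^(q^2)*b + a*b^(q^2)"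
  shows "{x::'a. x^q = x} \<subseteq> (\<lambda>y. a*y + b*y^(2^s)) ` {x. x^(q^2) = x} \<longleftrightarrow>
     (s = m \<and> a^(q^2) \<noteq> a \<and> \<delta> \<noteq> 0 \<and>
      \<delta>^q*(a^(q^2)+a) + \<delta>*(b^(q^3)+b^q) = 0 \<and>
      \<delta>^q*(b^(q^2)+b) + \<delta>*(a^(q^3)+a^q) = 0)"
proof -
  have qpos: "q > 0" using hq by simp
  have q2: "q^2 = 2^(2*m)" using hq by (simp add: power_mult[symmetric] mult.commute)
  have Qa: "((x::'a) + y)^q = x^q + y^q" for x y using hq add_pow2[OF two] by simp
  have Q2a: "((x::'a) + y)^(q^2) = x^(q^2) + y^(q^2)" for x y using q2 add_pow2[OF two] by simp
  have qq: "(x::'a)^(q^2) = (x^q)^q" for x by (simp add: power2_eq_square power_mult)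
  have q3: "(x::'a)^(q^3) = (x^(q^2))^q" for x by (simp add: power_mult[symmetric] power_add[symmetric]
       eval_nat_numeral mult.commute)
  have Fq_K: "(u::'a)^q = u \<Longrightarrow> u^(q^2) = u" for u by (simp add: qq)
  have sK: "(y::'a)^(q^2) = y \<Longrightarrow> (y^(2^s))^(q^2) = y^(2^s)" for y
    by (metis power_mult mult.commute)
  let ?a' = "a^(q^2)" and ?b' = "b^(q^2)"
  have key: "\<delta>*y = u*(?b'+b) \<and> \<delta>*y^(2^s) = u*(?a'+a)"
    if u: "u^q = u" and y: "y^(q^2) = y" and e: "u = a*y + b*y^(2^s)" for u y
  proof -
    define Y where "Y = y^(2^s)"
    have YK: "Y^(q^2) = Y" using sK[OF y] by (simp add: Y_def)
    have e': "u = ?a'*y + ?b'*Y"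
    proof -
      have "u = u^(q^2)" using Fq_K[OF u] by simp
      also have "... = (a*y + b*Y)^(q^2)" using e by (simp add: Y_def)
      also have "... = ?a'*y + ?b'*Y" using y YK by (simp add: Q2a power_mult_distrib)
      finally show ?thesis .
    qed
    have e1: "u*?b' = (a*y + b*Y)*?b'" using e by (simp add: Y_def)
    have e2: "u*b = (?a'*y + ?b'*Y)*b" using e' by simp
    have e3: "u*?a' = (a*y + b*Y)*?a'" using e by (simp add: Y_def)
    have e4: "u*a = (?a'*y + ?b'*Y)*a" using e' by simp
    have "u*(?b'+b) = \<delta>*y + (b*?b'*Y + b*?b'*Y)"
      unfolding distrib_left e1 e2 \<delta>_def by (simp add: algebra_simps two)
    moreover have "u*(?a'+a) = \<delta>*Y + (a*?a'*y + a*?a'*y)"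
      unfolding distrib_left e3 e4 \<delta>_def by (simp add: algebra_simps two)
    ultimately show ?thesis by (simp add: Y_def)
  qed
  show ?thesis
  proof
    assume H: "{x::'a. x^q = x} \<subseteq> (\<lambda>y. a*y + b*y^(2^s)) ` {x. x^(q^2) = x}"
    have sol: "\<exists>y. y^(q^2) = y \<and> u = a*y + b*y^(2^s)" if "u^q = u" for u
      using H that by blast
    obtain y1 where y1: "y1^(q^2) = y1" "1 = a*y1 + b*y1^(2^s)" using sol[of 1] by auto
    have d0: "\<delta> \<noteq> 0"
    proof
      assume d: "\<delta> = 0"
      show False
      proof (cases "b = 0")
        case True
        hence ay: "a*y1 = 1" using y1(2) by simp
        hence "y1 \<noteq> 0" by auto
        hence "a = 1 / y1" using ay by (simp add: eq_divide_eq)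
        hence "a^(q^2) = a" using y1(1) by (simp add: power_divide)
        thus False using notA True qpos by simp
      next
        case False
        have "?a' * b = a * ?b'" using d eq_iff_add0[OF two] by (simp add: \<delta>_def)
        hence lK: "(a/b)^(q^2) = a/b" using False by (simp add: power_divide divide_simps mult.commute)
        have "1 / b = (a/b)*y1 + y1^(2^s)" using y1(2) False by (simp add: field_simps)
        moreover have "((a/b)*y1 + y1^(2^s))^(q^2) = (a/b)*y1 + y1^(2^s)"
          by (simp only: Q2a power_mult_distrib lK y1(1) sK[OF y1(1)])
        ultimately have "(1/b)^(q^2) = 1/b" by simp
        hence bK: "b^(q^2) = b" by (simp add: power_divide)
        hence "a^(q^2) = a" using lK False by (simp add: power_divide)
        thus False using notA bK by simp
      qed
    qed
    have k1: "\<delta>*y1 = ?b'+b" "\<delta>*y1^(2^s) = ?a'+a" using key[of 1 y1] y1 by auto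
    have a'a: "?a' \<noteq> a"
    proof
      assume h: "?a' = a"
      hence "\<delta>*y1^(2^s) = 0" using k1(2) by simp
      hence "y1 = 0" using d0 by simp
      hence "?b' = b" using k1(1) eq_iff_add0[OF two] by simp
      thus False using notA h by simp
    qed
    have Y10: "y1^(2^s) \<noteq> 0"
    proof
      assume z: "y1^(2^s) = 0"
      have "?a' + a = 0" using k1(2) by (metis z mult_zero_right)
      thus False using a'a by (metis eq_iff_add0[OF two])
    qed
    have uu: "u^(2^s) = u" if u: "u^q = u" for u :: 'a
    proof -
      obtain y where y: "y^(q^2) = y" "u = a*y + b*y^(2^s)" using sol[OF u] by blast
      have k: "\<delta>*y = u*(?b'+b)" "\<delta>*y^(2^s) = u*(?a'+a)" using key[OF u y] by auto
      have "\<delta>*y = u*(\<delta>*y1)" by (simp only: k(1) k1(1))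
      hence "\<delta>*y = \<delta>*(u*y1)" by (simp add: mult.left_commute)
      hence yy: "y = u*y1" using d0 by simp
      have "\<delta>*y^(2^s) = u*(\<delta>*y1^(2^s))" by (simp only: k(2) k1(2))
      hence "\<delta>*y^(2^s) = \<delta>*(u*y1^(2^s))" by (simp add: mult.left_commute)
      hence "y^(2^s) = u*y1^(2^s)" using d0 by simp
      hence "u^(2^s) * y1^(2^s) = u * y1^(2^s)" using yy by (simp add: power_mult_distrib)
      thus ?thesis using Y10 by simp
    qed
    have sm: "s = m"
    proof -
      have g1: "gcd s m \<ge> 1" using m1 by (simp add: Suc_le_eq)
      have "{u::'a. u^q = u} \<subseteq> {u. u^(2^(gcd s m)) = u}"
        using uu hq bz_fix by auto
      hence "card {u::'a. u^q = u} \<le> card {u::'a. u^(2^(gcd s m)) = u}" by (intro card_mono) auto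
      also have "... \<le> 2^(gcd s m)" by (rule fixK_card[OF g1])
      finally have "(2::nat)^m \<le> 2^(gcd s m)" using ptr_image(2)[OF m1 n1 mn] hq by simp
      hence "m \<le> gcd s m" by simp
      moreover have "gcd s m \<le> m" using m1 by (simp add: gcd_le2_nat)
      ultimately have "gcd s m = m" by simp
      hence "m dvd s" by (metis gcd_dvd1)
      then obtain t where "s = m*t" by blast
      moreover have "t = 1" using s0 s2 \<open>s = m*t\<close> m1
        by (cases t; cases "t - 1"; auto)
      ultimately show ?thesis by simp
    qed
    have sq: "(2::nat)^s = q" using sm hq by simp
    have eq1: "\<delta>^q*(?a'+a) + \<delta>*(b^(q^3)+b^q) = 0"
    proof -
      have "b^(q^3)+b^q = (?b'+b)^q" by (simp add: q3 Qa)
      also have "... = \<delta>^q * y1^q" using k1(1) by (metis power_mult_distrib)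
      finally have "b^(q^3)+b^q = \<delta>^q * y1^q" .
      moreover have "?a'+a = \<delta>*y1^q" using k1(2) sq by simp
      ultimately show ?thesis by (simp add: algebra_simps)
    qed
    have eq2: "\<delta>^q*(?b'+b) + \<delta>*(a^(q^3)+a^q) = 0"
    proof -
      have "a^(q^3)+a^q = (?a'+a)^q" by (simp add: q3 Qa)
      also have "... = (\<delta> * y1^q)^q" using k1(2) sq by simp
      also have "... = \<delta>^q * y1" using y1(1) by (simp add: power_mult_distrib qq)
      finally have "a^(q^3)+a^q = \<delta>^q * y1" .
      moreover have "?b'+b = \<delta>*y1" using k1(1) by simp
      ultimately show ?thesis by (simp add: algebra_simps)
    qed
    show "s = m \<and> ?a' \<noteq> a \<and> \<delta> \<noteq> 0 \<and>
      \<delta>^q*(?a'+a) + \<delta>*(b^(q^3)+b^q) = 0 \<and> \<delta>^q*(?b'+b) + \<delta>*(a^(q^3)+a^q) = 0"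
      using sm a'a d0 eq1 eq2 by blast
  next
    assume R: "s = m \<and> ?a' \<noteq> a \<and> \<delta> \<noteq> 0 \<and>
      \<delta>^q*(?a'+a) + \<delta>*(b^(q^3)+b^q) = 0 \<and> \<delta>^q*(?b'+b) + \<delta>*(a^(q^3)+a^q) = 0"
    hence sm: "s = m" and d0: "\<delta> \<noteq> 0" and r1: "\<delta>^q*(?a'+a) + \<delta>*(b^(q^3)+b^q) = 0"
      and r2: "\<delta>^q*(?b'+b) + \<delta>*(a^(q^3)+a^q) = 0" by auto
    have sq: "(2::nat)^s = q" using sm hq by simp
    define \<alpha> where "\<alpha> = (?a'+a)/\<delta>"
    define \<beta> where "\<beta> = (?b'+b)/\<delta>"
    have ad: "?a'+a = \<delta>*\<alpha>" and bd: "?b'+b = \<delta>*\<beta>" using d0 by (simp_all add: \<alpha>_def \<beta>_def)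
    have dq0: "\<delta>^q \<noteq> 0" using d0 by simp
    have bq: "(\<delta>*\<beta>)^q = (b^(q^2))^q + b^q" by (simp only: bd[symmetric] Qa)
    have aq: "(\<delta>*\<alpha>)^q = (a^(q^2))^q + a^q" by (simp only: ad[symmetric] Qa)
    have "\<delta>^q*(\<delta>*\<alpha>) + \<delta>*(\<delta>*\<beta>)^q = 0" using r1 ad bq by (simp add: q3)
    hence "(\<delta>^q*\<delta>)*(\<alpha> + \<beta>^q) = 0" by (simp add: algebra_simps power_mult_distrib)
    hence ab: "\<alpha> = \<beta>^q" using d0 dq0 eq_iff_add0[OF two] by simp
    have "\<delta>^q*(\<delta>*\<beta>) + \<delta>*(\<delta>*\<alpha>)^q = 0" using r2 bd aq by (simp add: q3)
    hence "(\<delta>^q*\<delta>)*(\<beta> + \<alpha>^q) = 0" by (simp add: algebra_simps power_mult_distrib)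
    hence ba: "\<beta> = \<alpha>^q" using d0 dq0 eq_iff_add0[OF two] by simp
    have bK: "\<beta>^(q^2) = \<beta>" using ab ba by (simp add: qq)
    show "{x::'a. x^q = x} \<subseteq> (\<lambda>y. a*y + b*y^(2^s)) ` {x. x^(q^2) = x}"
    proof
      fix u :: 'a assume "u \<in> {x. x^q = x}"
      hence u: "u^q = u" by simp
      have yK: "(u*\<beta>)^(q^2) = u*\<beta>" using Fq_K[OF u] bK by (simp add: power_mult_distrib)
      have "a*(u*\<beta>) + b*(u*\<beta>)^(2^s) = u*(a*\<beta> + b*\<alpha>)"
        using u ab sq by (simp add: power_mult_distrib algebra_simps)
      also have "a*\<beta> + b*\<alpha> = (a*?b' + ?a'*b + (a*b + a*b))/\<delta>"
        by (simp add: \<alpha>_def \<beta>_def add_divide_distrib algebra_simps two)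
      also have "... = 1" using d0 by (simp add: \<delta>_def add.commute)
      finally show "u \<in> (\<lambda>y. a*y + b*y^(2^s)) ` {x. x^(q^2) = x}" using yK by force
    qed
  qed
qed

end


context gf
begin

lemma ptr_split: "ptr m (2*h) (y::'a) = ptr (2*m) h y + (ptr (2*m) h y)^(2^m)"
proof (induction h)
  case 0 then show ?case by (simp add: ptr_def)
next
  case (Suc h)
  have e1: "ptr m (2*Suc h) y = ptr m (2*h) y + y^(2^(m*(2*h))) + y^(2^(m*(2*h) + m))"
    by (simp add: ptr_def algebra_simps)
  have e2: "ptr (2*m) (Suc h) y = ptr (2*m) h y + y^(2^(m*(2*h)))"
    by (simp add: ptr_def algebra_simps)
  have e3: "(y^(2^(m*(2*h))))^(2^m) = y^(2^(m*(2*h) + m))" by (simp add: pow2_add)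
  show ?case unfolding e1 e2 Suc add_pow2[OF two] e3 by (simp add: algebra_simps)
qed

lemma caseA_reduce:
  fixes a b :: 'a
  assumes m1: "m \<ge> 1" and hq: "q = 2^m" and n2: "even n" "n \<ge> 2" and mn: "m*n = N"
    and s0: "0 < s" and s2: "s < 2*m"
    and aK: "a^(q^2) = a" and bK: "b^(q^2) = b"
  shows "{x::'a. x^q = x} \<subseteq> (\<lambda>y. a*y + b*y^(2^s)) ` {x. x^(q^2) = x} \<longleftrightarrow>
    (\<forall>w. w^(q^2) = w \<longrightarrow> (a*w)^(2^s) = b*w \<longrightarrow> w^q = w)"
proof -
  have q2: "q^2 = 2^(2*m)" using hq by (simp add: power_mult[symmetric] mult.commute)
  define G' where "G' y = a*y + (b*y)^(2^(N-s))" for y :: 'a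
  have sN: "s \<le> N" using s2 n2 mn by (metis dual_order.trans less_imp_le_nat mult.commute mult_le_mono2)
  have add: "a*(x+y) + b*(x+y)^(2^s) = (a*x + b*x^(2^s)) + (a*y + b*y^(2^s))" for x y :: 'a
    by (simp add: add_pow2[OF two] algebra_simps)
  have adj: "tr ((a*x + b*x^(2^s)) * y) = tr (x * G' y)" for x y :: 'a
  proof -
    have "tr (x * (b*y)^(2^(N-s))) = tr ((x * (b*y)^(2^(N-s)))^(2^s))" by (rule tr_pow[symmetric])
    also have "... = tr (x^(2^s) * (b*y)^(2^(N-s+s)))" by (simp add: power_mult_distrib pow2_add)
    also have "... = tr (x^(2^s) * (b*y))" using sN frobN by simp
    finally have "tr (x * (b*y)^(2^(N-s))) = tr (b * x^(2^s) * y)" by (simp add: ac_simps)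
    thus ?thesis by (simp add: G'_def algebra_simps tr_add)
  qed
  have h1: "n div 2 \<ge> 1" using n2 by simp
  have m2: "2*m \<ge> 1" using m1 by simp
  have mn2: "2*m * (n div 2) = N" using n2(1) mn by (metis dvd_mult_div_cancel mult.assoc mult.commute)
  have n1: "n \<ge> 1" using n2 by simp
  have red: "(\<forall>y. ptr (2*m) (n div 2) (G' y) = 0 \<longrightarrow> ptr m n y = 0) \<longleftrightarrow>
      {x::'a. x^(2^m) = x} \<subseteq> (\<lambda>y. a*y + b*y^(2^s)) ` {x. x^(2^(2*m)) = x}"
    by (rule main_reduction[OF add adj m1 n1 mn m2 h1 mn2])
  have aK': "a^(2^(2*m)) = a" and bK': "b^(2^(2*m)) = b" using aK bK q2 by auto
  have comm: "ptr (2*m) (n div 2) (G' y) = G' (ptr (2*m) (n div 2) y)" for y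
    by (simp add: G'_def ptr_add ptr_scal[OF aK'] ptr_pow ptr_scal[OF bK', symmetric])
  have splt: "ptr m n y = ptr (2*m) (n div 2) y + (ptr (2*m) (n div 2) y)^q" for y :: 'a
    using ptr_split[of m "n div 2" y] n2 hq by simp
  have rng: "range (ptr (2*m) (n div 2) :: 'a \<Rightarrow> 'a) = {x. x^(q^2) = x}"
    using ptr_image(1)[OF m2 h1 mn2] q2 by simp
  have G'0: "G' w = 0 \<longleftrightarrow> (a*w)^(2^s) = b*w" for w
  proof
    assume "G' w = 0"
    hence "a*w = (b*w)^(2^(N-s))" unfolding G'_def by (metis eq_iff_add0[OF two])
    hence "(a*w)^(2^s) = (b*w)^(2^(N-s+s))" by (simp add: pow2_add)
    thus "(a*w)^(2^s) = b*w" using sN frobN by simp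
  next
    assume h: "(a*w)^(2^s) = b*w"
    have "((b*w)^(2^(N-s)))^(2^s) = b*w" using sN frobN by (simp add: pow2_add[symmetric])
    hence "(a*w)^(2^s) = ((b*w)^(2^(N-s)))^(2^s)" using h by simp
    hence "a*w = (b*w)^(2^(N-s))" by (rule pow2_inj[OF two])
    thus "G' w = 0" unfolding G'_def by (metis eq_iff_add0[OF two])
  qed
  have "(\<forall>y. ptr (2*m) (n div 2) (G' y) = 0 \<longrightarrow> ptr m n y = 0) \<longleftrightarrow>
      (\<forall>w. w^(q^2) = w \<longrightarrow> (a*w)^(2^s) = b*w \<longrightarrow> w^q = w)"
  proof
    assume L: "\<forall>y. ptr (2*m) (n div 2) (G' y) = 0 \<longrightarrow> ptr m n y = 0"
    show "\<forall>w. w^(q^2) = w \<longrightarrow> (a*w)^(2^s) = b*w \<longrightarrow> w^q = w"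
    proof (intro allI impI)
      fix w :: 'a assume w: "w^(q^2) = w" "(a*w)^(2^s) = b*w"
      then obtain y where y: "w = ptr (2*m) (n div 2) y" using rng by blast
      have "ptr (2*m) (n div 2) (G' y) = 0" using comm G'0 w(2) y by simp
      hence "ptr m n y = 0" using L by blast
      hence "w + w^q = 0" using splt y by simp
      thus "w^q = w" by (metis eq_iff_add0[OF two])
    qed
  next
    assume R: "\<forall>w. w^(q^2) = w \<longrightarrow> (a*w)^(2^s) = b*w \<longrightarrow> w^q = w"
    show "\<forall>y. ptr (2*m) (n div 2) (G' y) = 0 \<longrightarrow> ptr m n y = 0"
    proof (intro allI impI)
      fix y :: 'a assume y: "ptr (2*m) (n div 2) (G' y) = 0"
      define w where "w = ptr (2*m) (n div 2) y"
      have wK: "w^(q^2) = w" using rng w_def by blast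
      have "(a*w)^(2^s) = b*w" using y comm G'0 w_def by simp
      hence "w^q = w" using R wK by blast
      thus "ptr m n y = 0" using splt w_def by simp
    qed
  qed
  thus ?thesis using red hq q2 by simp
qed

end


context gf
begin

lemma caseA_alg:
  fixes a b :: 'a
  assumes m1: "m \<ge> 1" and hq: "q = 2^m" and n2: "even n" "n \<ge> 2" and mn: "m*n = N"
    and s0: "0 < s" and s2: "s < 2*m"
    and aK: "a^(q^2) = a" and bK: "b^(q^2) = b"
  defines "e \<equiv> gcd s (2*m)"
  shows "(\<forall>w. w^(q^2) = w \<longrightarrow> (a*w)^(2^s) = b*w \<longrightarrow> w^q = w) \<longleftrightarrow>
     (a^((q^2 - 1) div (2^e - 1)) \<noteq> b^((q^2 - 1) div (2^e - 1)) \<or>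
      (e dvd m \<and> a \<noteq> 0 \<and> b \<noteq> 0 \<and> a^((2^s * (q - 1)) div (2^e - 1)) = b^((q - 1) div (2^e - 1))))"
  (is "?C \<longleftrightarrow> ?R2 \<or> ?R3")
proof -
  have q2: "q^2 = 2^(2*m)" using hq by (simp add: power_mult[symmetric] mult.commute)
  have h1: "n div 2 \<ge> 1" using n2 by simp
  have m2: "2*m \<ge> 1" using m1 by simp
  have mn2: "2*m * (n div 2) = N" using n2(1) mn by (metis dvd_mult_div_cancel mult.assoc mult.commute)
  have n1: "n \<ge> 1" using n2 by simp
  define E where "E = (q^2 - 1) div (2^e - (1::nat))"
  define D where "D = 2^s - (1::nat)"
  have e1: "e \<ge> 1" using m1 by (simp add: e_def Suc_le_eq)
  have "(1::nat) < 2^e" using e1 by (intro one_less_power) auto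
  hence Hpos: "(2::nat)^e - 1 > 0" by simp
  have "(1::nat) < 2^(2*m)" using m1 by (intro one_less_power) auto
  hence Qpos: "(2::nat)^(2*m) - 1 > 0" by simp
  have dvdQ: "(2^e - 1) dvd (2^(2*m) - (1::nat))" unfolding e_def by (rule mersenne_dvd) simp
  have dvdD: "(2^e - 1) dvd D" unfolding D_def e_def by (rule mersenne_dvd) simp
  have QE: "2^(2*m) - 1 = (2^e - 1) * E" using dvdQ q2 by (simp add: E_def)
  have Epos: "E > 0" using QE Qpos by (cases "E = 0") auto
  have GL2: "card {\<mu>::'a. \<mu> \<noteq> 0 \<and> \<mu>^(2^e) = \<mu>} = 2^e - 1"
    using GL(1)[OF m2 h1 mn2 s0] by (simp add: e_def)
  have GLc2: "(\<exists>w. w^(2^(2*m)) = w \<and> w \<noteq> 0 \<and> w^D = c) \<longleftrightarrow> c^E = 1"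
    if "c^(2^(2*m)) = c" "c \<noteq> 0" for c :: 'a
    using GL(2)[OF m2 h1 mn2 s0 that] q2 by (simp add: E_def D_def e_def)
  have GLb2: "(\<mu>^D = 1 \<and> \<mu>^(2^(2*m)) = \<mu>) \<longleftrightarrow> \<mu>^(2^e) = \<mu>" if "\<mu> \<noteq> 0" for \<mu> :: 'a
    using GLb[OF m2 h1 mn2 s0 that] by (simp add: D_def e_def)
  have KFq: "{x::'a. x^(q^2) = x} \<noteq> {x. x^q = x} \<and> {x::'a. x^q = x} \<subseteq> {x. x^(q^2) = x}"
  proof -
    have "card {x::'a. x^(q^2) = x} = 2^(2*m)" using ptr_image(2)[OF m2 h1 mn2] q2 by simp
    moreover have "card {x::'a. x^q = x} = 2^m" using ptr_image(2)[OF m1 n1 mn] hq by simp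
    moreover have "(2::nat)^m < 2^(2*m)" using m1 by simp
    ultimately show ?thesis by (auto simp: power2_eq_square power_mult)
  qed
  then obtain w1 :: 'a where w1: "w1^(q^2) = w1" "w1^q \<noteq> w1" by blast
  have Ezero: "(0::'a)^E = 0" using Epos by simp
  have R2E: "?R2 \<longleftrightarrow> a^E \<noteq> b^E" by (simp add: E_def)
  show ?thesis
  proof (cases "a = 0")
    case a0: True
    show ?thesis
    proof (cases "b = 0")
      case True
      have "\<not> ?C" using a0 True w1 s0 by auto
      moreover have "\<not> ?R2 \<and> \<not> ?R3" using a0 True by simp
      ultimately show ?thesis by blast
    next
      case False
      have "?C" using a0 False s0 hq by (simp add: power_0_left)
      moreover have "?R2" using R2E a0 False Ezero by simp
      ultimately show ?thesis by blast
    qed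
  next
    case a0: False
    show ?thesis
    proof (cases "b = 0")
      case True
      have "?C" using a0 True s0 hq by (simp add: power_mult_distrib power_0_left)
      moreover have "?R2" using R2E a0 True Ezero by simp
      ultimately show ?thesis by blast
    next
      case b0: False
      define c where "c = b / a^(2^s)"
      have c0: "c \<noteq> 0" using a0 b0 by (simp add: c_def)
      have aK2: "a^(2^(2*m)) = a" and bK2: "b^(2^(2*m)) = b" using aK bK q2 by auto
      have cK: "c^(2^(2*m)) = c" using aK2 bK2 by (simp add: c_def power_divide fix_pow)
      have Ds: "2^s = D + 1" by (simp add: D_def)
      have Cw: "(a*w)^(2^s) = b*w \<longleftrightarrow> w = 0 \<or> w^D = c" for w :: 'a
      proof -
        have "(a*w)^(2^s) = a^(2^s) * w^D * w" by (simp add: Ds power_mult_distrib)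
        thus ?thesis using a0 by (auto simp: c_def field_simps)
      qed
      have C2: "?C \<longleftrightarrow> (\<forall>w. w^(2^(2*m)) = w \<longrightarrow> w \<noteq> 0 \<longrightarrow> w^D = c \<longrightarrow> w^q = w)"
        using Cw q2 hq by auto
      obtain D1 where D1: "D = (2^e - 1) * D1" using dvdD by blast
      have DE: "D * E = (2^(2*m) - 1) * D1" using D1 QE by (simp add: algebra_simps)
      have aunit: "a^(2^(2*m) - 1) = 1" by (rule unit_pow[OF a0 aK2])
      have aE: "(a^(2^s))^E = a^E"
      proof -
        have "(a^(2^s))^E = a^(D*E) * a^E" by (simp add: Ds power_mult[symmetric] power_add algebra_simps)
        also have "a^(D*E) = (a^(2^(2*m) - 1))^D1" by (subst DE) (rule power_mult)
        also have "... = 1" by (simp only: aunit power_one)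
        finally show ?thesis by simp
      qed
      have cE: "c^E = b^E / a^E" by (simp add: c_def power_divide aE)
      have R2c: "?R2 \<longleftrightarrow> c^E \<noteq> 1" using a0 R2E by (auto simp: cE)
      show ?thesis
      proof (cases "c^E = 1")
        case False
        have "?C" unfolding C2 using GLc2[OF cK c0] False by blast
        thus ?thesis using R2c False by blast
      next
        case cE1: True
        obtain w0 where w0: "w0^(2^(2*m)) = w0" "w0 \<noteq> 0" "w0^D = c" using GLc2[OF cK c0] cE1 by blast
        have R3c: "?R3 \<longleftrightarrow> e dvd m \<and> c^((q - 1) div (2^e - 1)) = 1"
        proof (cases "e dvd m")
          case True
          have "(2^e - 1) dvd (q - (1::nat))" unfolding hq by (rule mersenne_dvd[OF True])
          hence "(2^s * (q - 1)) div (2^e - 1) = 2^s * ((q - 1) div (2^e - (1::nat)))"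
            by (simp add: div_mult_swap)
          hence "a^((2^s * (q - 1)) div (2^e - 1)) = (a^(2^s))^((q - 1) div (2^e - 1))"
            by (simp add: power_mult)
          moreover have "c^((q - 1) div (2^e - 1)) = b^((q - 1) div (2^e - 1)) / (a^(2^s))^((q - 1) div (2^e - 1))"
            by (simp add: c_def power_divide)
          ultimately show ?thesis using a0 b0 True by (auto simp: field_simps)
        qed simp
        have "?C \<longleftrightarrow> ?R3"
        proof
          assume C: ?C
          have w0q: "w0^q = w0" using C2 C w0 by blast
          have edvd: "e dvd m"
          proof -
            have "{\<mu>::'a. \<mu> \<noteq> 0 \<and> \<mu>^(2^e) = \<mu>} \<subseteq> {\<mu>. \<mu>^(2^(gcd e m)) = \<mu>} - {0}"
            proof safe
              fix \<mu> :: 'a assume mu: "\<mu> \<noteq> 0" "\<mu>^(2^e) = \<mu>"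
              hence mD: "\<mu>^D = 1" "\<mu>^(2^(2*m)) = \<mu>" using GLb2 by auto
              have "(w0*\<mu>)^(2^(2*m)) = w0*\<mu>" using w0(1) mD(2) by (simp add: power_mult_distrib)
              moreover have "(w0*\<mu>)^D = c" using w0(3) mD(1) by (simp add: power_mult_distrib)
              ultimately have "(w0*\<mu>)^q = w0*\<mu>" using C2 C w0(2) mu(1) by simp
              hence "\<mu>^q = \<mu>" using w0q w0(2) by (simp add: power_mult_distrib)
              hence "\<mu>^(2^m) = \<mu>" using hq by simp
              thus "\<mu>^(2^(gcd e m)) = \<mu>" using bz_fix mu(2) by blast
            qed
            hence "card {\<mu>::'a. \<mu> \<noteq> 0 \<and> \<mu>^(2^e) = \<mu>} \<le> card ({\<mu>::'a. \<mu>^(2^(gcd e m)) = \<mu>} - {0})"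
              by (intro card_mono) auto
            also have "... = card {\<mu>::'a. \<mu>^(2^(gcd e m)) = \<mu>} - 1"
              using e1 by (simp add: card_Diff_singleton)
            also have "... \<le> 2^(gcd e m) - 1"
              using fixK_card[of "gcd e m"] e1 by (simp add: Suc_le_eq diff_le_mono)
            finally have "2^e - 1 \<le> 2^(gcd e m) - (1::nat)" using GL2 by simp
            moreover have "(1::nat) \<le> 2^(gcd e m)" by simp
            ultimately have "(2::nat)^e \<le> 2^(gcd e m)" using Hpos by linarith
            hence "e \<le> gcd e m" by simp
            moreover have "gcd e m \<le> e" using e1 by (simp add: gcd_le1_nat)
            ultimately have "gcd e m = e" by simp
            thus ?thesis by (metis gcd_dvd2)
          qed
          have gsm: "gcd s m = e"
          proof -
            have "e dvd s" by (simp add: e_def)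
            hence "e dvd gcd s m" using edvd by simp
            moreover have "gcd s m dvd e" unfolding e_def by (simp add: gcd_mult_left_right_cancel
                  dvd_mult gcd_dvd1 gcd_dvd2 gcd_greatest)
            ultimately show ?thesis by (simp add: dvd_antisym)
          qed
          have cq: "c^(2^m) = c" using w0(3) w0q hq by (metis fix_pow)
          have "(\<exists>w. w^(2^m) = w \<and> w \<noteq> 0 \<and> w^(2^s - 1) = c)" using w0 w0q hq D_def by auto
          hence "c^((2^m - 1) div (2^(gcd s m) - 1)) = 1" using GL(2)[OF m1 n1 mn s0 cq c0] by simp
          hence "c^((q - 1) div (2^e - 1)) = 1" using gsm hq by simp
          thus ?R3 using R3c edvd by simp
        next
          assume ?R3
          hence edvd: "e dvd m" and cE1': "c^((q - 1) div (2^e - 1)) = 1" using R3c by auto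
          have gsm: "gcd s m = e"
          proof -
            have "e dvd s" by (simp add: e_def)
            hence "e dvd gcd s m" using edvd by simp
            moreover have "gcd s m dvd e" unfolding e_def by (simp add: gcd_mult_left_right_cancel
                  dvd_mult gcd_dvd1 gcd_dvd2 gcd_greatest)
            ultimately show ?thesis by (simp add: dvd_antisym)
          qed
          have dq: "(2^e - 1) dvd (q - (1::nat))" unfolding hq by (rule mersenne_dvd[OF edvd])
          have cq: "c^(2^m) = c"
          proof -
            have "q - 1 = (2^e - 1) * ((q - 1) div (2^e - 1))" using dq by simp
            hence "c^(q - 1) = 1" using cE1' by (metis power_mult mult.commute power_one)
            moreover have "c^q = c^(q-1) * c" using hq by (metis power_minus_mult zero_less_power pos2)
            ultimately show ?thesis using hq by simp
          qed
          have "c^((2^m - 1) div (2^(gcd s m) - 1)) = 1" using cE1' gsm hq by simp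
          then obtain v where v: "v^(2^m) = v" "v \<noteq> 0" "v^(2^s - 1) = c"
            using GL(2)[OF m1 n1 mn s0 cq c0] by blast
          show ?C unfolding C2
          proof (intro allI impI)
            fix w :: 'a assume w: "w^(2^(2*m)) = w" "w \<noteq> 0" "w^D = c"
            have vK: "v^(2^(2*m)) = v" using v(1) by (metis fix_iter mult.commute)
            have "(w/v)^D = 1" using w(3) v(2,3) c0 by (simp add: power_divide D_def)
            moreover have "(w/v)^(2^(2*m)) = w/v" using w(1) vK by (simp add: power_divide)
            moreover have "w/v \<noteq> 0" using w(2) v(2) by simp
            ultimately have "(w/v)^(2^e) = w/v" using GLb2 by blast
            hence "(w/v)^(2^m) = w/v" using edvd by (metis dvd_def fix_iter)
            hence "w^(2^m) = w" using v(1,2) by (simp add: power_divide)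
            thus "w^q = w" using hq by simp
          qed
        qed
        thus ?thesis using R2c cE1 by blast
      qed
    qed
  qed
qed

end


lemma sum_mod_group:
  fixes f :: "nat \<Rightarrow> 'a::comm_monoid_add"
  assumes "k < M"
  shows "(\<Sum>i<h*M. if i mod M = k then f (i div M) else 0) = (\<Sum>j<h. f j)"
proof -
  have "(\<Sum>i<h*M. if i mod M = k then f (i div M) else 0)
      = (\<Sum>j<h. \<Sum>i\<in>{j*M..<j*M+M}. if i mod M = k then f (i div M) else 0)"
    by (rule sum.nat_group[symmetric])
  also have "... = (\<Sum>j<h. f j)"
  proof (rule sum.cong[OF refl])
    fix j
    have inj: "inj_on (\<lambda>r. j*M + r) {..<M}" by (intro inj_onI) simp
    have im: "{j*M..<j*M+M} = (\<lambda>r. j*M + r) ` {..<M}"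
    proof (rule set_eqI, rule iffI)
      fix x assume "x \<in> {j*M..<j*M+M}"
      thus "x \<in> (\<lambda>r. j*M + r) ` {..<M}" by (intro image_eqI[where x="x - j*M"]) auto
    qed auto
    have "(\<Sum>i\<in>{j*M..<j*M+M}. if i mod M = k then f (i div M) else 0)
        = (\<Sum>r<M. if (j*M + r) mod M = k then f ((j*M + r) div M) else 0)"
      by (simp add: im sum.reindex[OF inj])
    also have "... = (\<Sum>r<M. if r = k then f j else 0)"
      by (rule sum.cong[OF refl]) simp
    also have "... = f j" using assms by (simp add: sum.delta)
    finally show "(\<Sum>i\<in>{j*M..<j*M+M}. if i mod M = k then f (i div M) else 0) = f j" .
  qed
  finally show ?thesis .
qed

theorem mainTheorem11:
  fixes m n k l q :: nat
    and c d :: "nat \<Rightarrow> 'a::{field,finite}"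
  assumes hm: "m \<ge> 1"
    and hq: "q = 2 ^ m"
    and hn: "even n"
    and hcard: "card (UNIV :: 'a set) = q ^ n"
    and hkl: "k < l" "l < 2 * m"
  defines "Lk \<equiv> q2_linear q n c"
    and "Ll \<equiv> q2_linear q n d"
  defines "e \<equiv> gcd (l - k) (2 * m)"
    and "a \<equiv> Lk 1"
    and "b \<equiv> Ll 1"
  defines "\<delta> \<equiv> a ^ (q^2) * b + a * b ^ (q^2)"
  shows "{x. trace_q2 q n (adjoint2 (m * n) (coeffL m k l c d) x) = 0} \<subseteq> {x. trace_q q n x = 0}
    \<longleftrightarrow>
      (l - k = m \<and> a ^ (q^2) \<noteq> a \<and> \<delta> \<noteq> 0 \<and>
        \<delta> ^ q * (a ^ (q^2) + a) + \<delta> * (b ^ (q^3) + b ^ q) = 0 \<and>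
        \<delta> ^ q * (b ^ (q^2) + b) + \<delta> * (a ^ (q^3) + a ^ q) = 0)
    \<or> (a ^ (q^2) = a \<and> b ^ (q^2) = b \<and>
        a ^ ((q^2 - 1) div (2^e - 1)) \<noteq> b ^ ((q^2 - 1) div (2^e - 1)))
    \<or> (e dvd m \<and> a \<noteq> 0 \<and> b \<noteq> 0 \<and> a ^ (q^2) = a \<and> b ^ (q^2) = b \<and>
        a ^ ((2^(l-k) * (q - 1)) div (2^e - 1)) = b ^ ((q - 1) div (2^e - 1)))"
proof -
  have n0: "n \<noteq> 0"
  proof
    assume "n = 0"
    hence "card (UNIV :: 'a set) = 1" using hcard by simp
    moreover have "card {0::'a, 1} = 2" by simp
    moreover have "card {0::'a, 1} \<le> card (UNIV :: 'a set)" by (rule card_mono) auto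
    ultimately show False by simp
  qed
  obtain t where "n = 2*t" using hn by blast
  hence n2: "n \<ge> 2" using n0 by simp
  have cardN: "card (UNIV :: 'a set) = 2^(m*n)" using hcard hq by (simp add: power_mult)
  have N1: "m*n \<ge> 1" using hm n2 by (simp add: Suc_le_eq)
  interpret gf "m*n" "undefined::'a" by unfold_locales (use cardN N1 in auto)
  define s where "s = l - k"
  have s0: "0 < s" and s2: "s < 2*m" using hkl by (auto simp: s_def)
  have q2: "q^2 = 2^(2*m)" using hq by (simp add: power_mult[symmetric] mult.commute)
  have h1: "n div 2 \<ge> 1" using n2 by simp
  have m2: "2*m \<ge> 1" using hm by simp
  have mn2: "2*m * (n div 2) = m*n" using hn by (metis dvd_mult_div_cancel mult.assoc mult.commute)
  have n1: "n \<ge> 1" using n2 by simp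
  have mnM: "m*n = (n div 2) * (2*m)" using mn2 by (metis mult.commute)
  have trq: "trace_q q n x = ptr m n x" for x :: 'a
    by (simp add: trace_q_def ptr_def hq power_mult[symmetric])
  have trq2: "trace_q2 q n x = ptr (2*m) (n div 2) x" for x :: 'a
    by (simp add: trace_q2_def ptr_def hq power_mult[symmetric] mult.assoc mult.left_commute)
  define G where "G = lin2_poly (m*n) (coeffL m k l c d)"
  define G' where "G' = adjoint2 (m*n) (coeffL m k l c d)"
  have Gadd: "G (x + y) = G x + G y" for x y :: 'a
    by (simp add: G_def lin2_poly_def add_pow2[OF two] distrib_left sum.distrib)
  have Gadj: "tr (G x * y) = tr (x * G' y)" for x y :: 'a
    unfolding G_def G'_def by (rule lin2_adj)
  have LHS: "{x. trace_q2 q n (adjoint2 (m * n) (coeffL m k l c d) x) = 0} \<subseteq> {x. trace_q q n x = 0}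
     \<longleftrightarrow> {x::'a. x^(2^m) = x} \<subseteq> G ` {x. x^(2^(2*m)) = x}"
  proof -
    have "{x. trace_q2 q n (adjoint2 (m * n) (coeffL m k l c d) x) = 0} \<subseteq> {x. trace_q q n x = 0}
      \<longleftrightarrow> (\<forall>y. ptr (2*m) (n div 2) (G' y) = 0 \<longrightarrow> ptr m n y = 0)"
      by (auto simp: trq trq2 G'_def)
    also have "... \<longleftrightarrow> {x::'a. x^(2^m) = x} \<subseteq> G ` {x. x^(2^(2*m)) = x}"
      by (rule main_reduction[OF Gadd Gadj hm n1 refl m2 h1 mn2])
    finally show ?thesis .
  qed
  have a_eq: "a = (\<Sum>j<n div 2. c j)" by (simp add: a_def Lk_def q2_linear_def)
  have b_eq: "b = (\<Sum>j<n div 2. d j)" by (simp add: b_def Ll_def q2_linear_def)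
  have Gv: "G v = a * v^(2^k) + b * v^(2^l)" if v: "v^(2^(2*m)) = v" for v :: 'a
  proof -
    have pm: "v^(2^i) = v^(2^(i mod (2*m)))" for i using pow2_mod[OF v] .
    have "G v = (\<Sum>i<m*n. (if i mod (2*m) = k then c (i div (2*m)) * v^(2^k) else 0))
              + (\<Sum>i<m*n. (if i mod (2*m) = l then d (i div (2*m)) * v^(2^l) else 0))"
      unfolding G_def lin2_poly_def coeffL_def sum.distrib[symmetric]
    proof (rule sum.cong[OF refl])
      fix i
      have pk: "i mod (2*m) = k \<Longrightarrow> v^(2^i) = v^(2^k)" using pm[of i] by simp
      have pl: "i mod (2*m) = l \<Longrightarrow> v^(2^i) = v^(2^l)" using pm[of i] by simp
      show "((if i mod (2*m) = k then c (i div (2*m)) else 0) + (if i mod (2*m) = l then d (i div (2*m)) else 0)) * v^(2^i)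
         = (if i mod (2*m) = k then c (i div (2*m)) * v^(2^k) else 0) + (if i mod (2*m) = l then d (i div (2*m)) * v^(2^l) else 0)"
        using hkl by (cases "i mod (2*m) = k"; cases "i mod (2*m) = l") (simp_all add: pk pl)
    qed
    also have "(\<Sum>i<m*n. (if i mod (2*m) = k then c (i div (2*m)) * v^(2^k) else 0))
       = (\<Sum>j<n div 2. c j * v^(2^k))"
      unfolding mnM by (rule sum_mod_group) (use hkl in simp)
    also have "(\<Sum>i<m*n. (if i mod (2*m) = l then d (i div (2*m)) * v^(2^l) else 0))
       = (\<Sum>j<n div 2. d j * v^(2^l))"
      unfolding mnM by (rule sum_mod_group) (use hkl in simp)
    finally show ?thesis by (simp add: a_eq b_eq sum_distrib_right)
  qed
  have img: "G ` {x. x^(2^(2*m)) = x} = (\<lambda>y. a*y + b*y^(2^s)) ` {x. x^(q^2) = x}"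
  proof -
    have l_eq: "l = k + s" using hkl by (simp add: s_def)
    have "G ` {x. x^(2^(2*m)) = x} = (\<lambda>v. a * v^(2^k) + b * v^(2^l)) ` {x. x^(2^(2*m)) = x}"
      by (rule image_cong[OF refl]) (simp add: Gv)
    also have "... = (\<lambda>y. a*y + b*y^(2^s)) ` ((\<lambda>v. v^(2^k)) ` {x. x^(2^(2*m)) = x})"
      by (simp add: image_image l_eq pow2_add)
    also have "(\<lambda>v. v^(2^k)) ` {x::'a. x^(2^(2*m)) = x} = {x. x^(2^(2*m)) = x}"
    proof safe
      fix v :: 'a assume "v^(2^(2*m)) = v"
      thus "(v^(2^k))^(2^(2*m)) = v^(2^k)" by (metis power_mult mult.commute)
    next
      fix y :: 'a assume y: "y^(2^(2*m)) = y"
      have "(y^(2^(2*m - k)))^(2^k) = y^(2^(2*m))" using hkl by (simp add: pow2_add[symmetric])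
      moreover have "(y^(2^(2*m - k)))^(2^(2*m)) = y^(2^(2*m - k))" using y by (metis power_mult mult.commute)
      ultimately show "y \<in> (\<lambda>v. v^(2^k)) ` {x. x^(2^(2*m)) = x}" using y by (metis (mono_tags) image_eqI mem_Collect_eq)
    qed
    finally show ?thesis using q2 by simp
  qed
  have main: "{x. trace_q2 q n (adjoint2 (m * n) (coeffL m k l c d) x) = 0} \<subseteq> {x. trace_q q n x = 0}
     \<longleftrightarrow> {x::'a. x^q = x} \<subseteq> (\<lambda>y. a*y + b*y^(2^s)) ` {x. x^(q^2) = x}"
    using LHS img hq by simp
  show ?thesis
  proof (cases "a^(q^2) = a \<and> b^(q^2) = b")
    case True
    have "{x. trace_q2 q n (adjoint2 (m * n) (coeffL m k l c d) x) = 0} \<subseteq> {x. trace_q q n x = 0}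
      \<longleftrightarrow> (a^((q^2 - 1) div (2^e - 1)) \<noteq> b^((q^2 - 1) div (2^e - 1)) \<or>
      (e dvd m \<and> a \<noteq> 0 \<and> b \<noteq> 0 \<and> a^((2^s * (q - 1)) div (2^e - 1)) = b^((q - 1) div (2^e - 1))))"
      unfolding main caseA_reduce[OF hm hq hn n2 refl s0 s2 True[THEN conjunct1] True[THEN conjunct2]]
      unfolding e_def s_def[symmetric]
      by (rule caseA_alg[OF hm hq hn n2 refl s0 s2 True[THEN conjunct1] True[THEN conjunct2]])
    thus ?thesis using True by (simp add: s_def)
  next
    case False
    have "{x. trace_q2 q n (adjoint2 (m * n) (coeffL m k l c d) x) = 0} \<subseteq> {x. trace_q q n x = 0}
      \<longleftrightarrow> (s = m \<and> a^(q^2) \<noteq> a \<and> \<delta> \<noteq> 0 \<and>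
      \<delta>^q*(a^(q^2)+a) + \<delta>*(b^(q^3)+b^q) = 0 \<and>
      \<delta>^q*(b^(q^2)+b) + \<delta>*(a^(q^3)+a^q) = 0)"
      unfolding main \<delta>_def by (rule caseB[OF hm hq n1 refl s0 s2 False])
    thus ?thesis using False by (auto simp: s_def)
  qed
qed


end
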